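(* There is an absolute constant $C>0$ such that the following holds. Let $B$ be a set of $n\ge 2$ natural numbers and let $B.B=\{bb' : b,b'\in B\}$. If $B.B$ contains an arithmetic progression $\{a, a+d, \ldots, a+(N-1)d\}$ with nonzero common difference $d$ and $N$ terms, then $N\le C\, n\log n$. *)

theory Defs
  imports "HOL-Analysis.Analysis"
begin

definition prodset :: "nat set \<Rightarrow> nat set" where
  "prodset B = {b * b' | b b'. b \<in> B \<and> b' \<in> B}"

end

theory Submission
  imports Defs "HOL-Library.Function_Algebras" "HOL-Computational_Algebra.Primes" "HOL-Real_Asymp.Real_Asymp"
begin

lemma prod_primes_dvd:
  fixes n :: nat
  assumes "finite A" "\<And>p. p\<in>A \<Longrightarrow> prime p" "\<And>p. p\<in>A \<Longrightarrow> p dvd n"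
  shows "\<Prod>A dvd n"
  using assms
proof (induction A rule: finite_induct)
  case empty thus ?case by simp
next
  case (insert p A)
  have pr: "prime p" using insert by auto
  have "\<not> p dvd \<Prod>A"
  proof
    assume "p dvd \<Prod>A"
    then obtain q where "q \<in> A" "p dvd q" using pr insert(1)
      by (metis prime_dvd_prod_iff)
    with insert show False by (metis insertCI prime_nat_iff primes_dvd_imp_eq)
  qed
  hence cop: "coprime p (\<Prod>A)" using pr by (simp add: prime_imp_coprime)
  have d1: "\<Prod>A dvd n" using insert by auto
  have d2: "p dvd n" using insert by auto
  have "p * \<Prod>A dvd n" using divides_mult[OF d2 d1 cop] .
  moreover have "\<Prod>(insert p A) = p * \<Prod>A" using insert(1,2) by simp
  ultimately show ?case by simp
qed

lemma choose_odd_le: "(2*m+1) choose m \<le> 4^m"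
proof -
  have s: "((2*m+1) choose m) = ((2*m+1) choose (m+1))"
    by (subst binomial_symmetric) auto
  have "((2*m+1) choose m) + ((2*m+1) choose (m+1)) \<le> (\<Sum>k\<le>2*m+1. (2*m+1) choose k)"
  proof -
    have "(\<Sum>k\<in>{m, m+1}. (2*m+1) choose k) \<le> (\<Sum>k\<le>2*m+1. (2*m+1) choose k)"
      by (rule sum_mono2) auto
    thus ?thesis by simp
  qed
  also have "\<dots> = 2^(2*m+1)" by (rule choose_row_sum)
  finally have "2 * ((2*m+1) choose m) \<le> 2 * 4^m" using s
    by (simp add: power_add power_mult)
  thus ?thesis by simp
qed

lemma primorial_le: "(\<Prod>{p::nat. prime p \<and> p \<le> x}) \<le> 4^x"
proof (induction x rule: less_induct)
  case (less x)
  show ?case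
  proof (cases "x \<le> 2")
    case True
    have "{p::nat. prime p \<and> p \<le> x} \<subseteq> {2}"
    proof
      fix p assume "p \<in> {p::nat. prime p \<and> p \<le> x}"
      hence "prime p" "p \<le> x" by auto
      thus "p \<in> {2}" using True prime_ge_2_nat[of p] by simp
    qed
    hence "{p::nat. prime p \<and> p \<le> x} = {} \<or> {p::nat. prime p \<and> p \<le> x} = {2}" by blast
    thus ?thesis
    proof
      assume e: "{p::nat. prime p \<and> p \<le> x} = {}"
      have "\<Prod>{p::nat. prime p \<and> p \<le> x} = 1" unfolding e by (rule prod.empty)
      moreover have "(1::nat) \<le> 4^x" by simp
      ultimately show ?thesis by linarith
    next
      assume h: "{p::nat. prime p \<and> p \<le> x} = {2}"
      hence "2 \<le> x" by auto
      hence "(4::nat)^2 \<le> 4^x" by (intro power_increasing) auto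
      thus ?thesis using h by simp
    qed
  next
    case False
    show ?thesis
    proof (cases "even x")
      case True
      have "{p::nat. prime p \<and> p \<le> x} = {p. prime p \<and> p \<le> x - 1}"
      proof (intro set_eqI iffI)
        fix p assume "p \<in> {p::nat. prime p \<and> p \<le> x}"
        hence p: "prime p" "p \<le> x" by auto
        have "p \<noteq> x"
        proof
          assume "p = x"
          hence "2 dvd p" using True by simp
          hence "p = 2" using p(1) unfolding prime_nat_iff by force
          thus False using \<open>p = x\<close> False by simp
        qed
        thus "p \<in> {p. prime p \<and> p \<le> x - 1}" using p by auto
      qed auto
      hence "\<Prod>{p::nat. prime p \<and> p \<le> x} \<le> 4^(x-1)" using less[of "x-1"] False by simp
      also have "\<dots> \<le> 4^x" by (rule power_increasing) auto
      finally show ?thesis .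
    next
      case odd: False
      then obtain m where m: "x = 2*m+1" by (metis oddE)
      have m1: "m \<ge> 1" using False m by simp
      let ?P1 = "{p::nat. prime p \<and> p \<le> m+1}" and ?P2 = "{p::nat. prime p \<and> m+1 < p \<and> p \<le> x}"
      have un: "{p::nat. prime p \<and> p \<le> x} = ?P1 \<union> ?P2" using m by auto
      have fin1: "finite ?P1" by (rule finite_subset[of _ "{..m+1}"]) auto
      have fin2: "finite ?P2" by (rule finite_subset[of _ "{..x}"]) auto
      have "\<Prod>{p::nat. prime p \<and> p \<le> x} = \<Prod>?P1 * \<Prod>?P2"
        unfolding un by (rule prod.union_disjoint[OF fin1 fin2]) auto
      also have "\<Prod>?P1 \<le> 4^(m+1)" using less[of "m+1"] m m1 by simp
      also have "\<Prod>?P2 \<le> (2*m+1) choose m"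
      proof (rule dvd_imp_le)
        show "0 < (2*m+1) choose m" by simp
        show "\<Prod>?P2 dvd (2*m+1) choose m"
        proof (rule prod_primes_dvd)
          fix p assume p: "p \<in> ?P2"
          hence pr: "prime p" by simp
          have "p \<le> 2*m+1" using p m by simp
          hence "p dvd fact (2*m+1)" using prime_dvd_fact_iff[OF pr] by blast
          hence "p dvd fact m * fact (m+1) * ((2*m+1) choose m)"
            using binomial_fact_lemma[of m "2*m+1"] by (simp add: algebra_simps)
          moreover have "\<not> p dvd fact m" using p prime_dvd_fact_iff[OF pr, of "m"] by auto
          moreover have "\<not> p dvd fact (m+1)" using p prime_dvd_fact_iff[OF pr, of "m+1"] by auto
          ultimately show "p dvd (2*m+1) choose m" using pr
            by (metis prime_dvd_mult_iff)
        qed auto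
      qed
      also have "(2*m+1) choose m \<le> 4^m" by (rule choose_odd_le)
      finally have "\<Prod>{p::nat. prime p \<and> p \<le> x} \<le> 4^(m+1) * 4^m" by simp
      also have "\<dots> = 4^x" using m by (simp add: power_add[symmetric])
      finally show ?thesis .
    qed
  qed
qed

lemma pi_bound:
  fixes y :: nat assumes y2: "y \<ge> 2"
  shows "real (card {p. prime p \<and> p \<le> y}) \<le> sqrt y + 2 * y * ln 4 / ln y"
proof -
  define P where "P = {p::nat. prime p \<and> p \<le> y}"
  define P1 where "P1 = {p\<in>P. p*p \<le> y}"
  define P2 where "P2 = {p\<in>P. \<not> p*p \<le> y}"
  have finP: "finite P" unfolding P_def by (rule finite_subset[of _ "{..y}"]) auto
  have fin1: "finite P1" and fin2: "finite P2" using finP unfolding P1_def P2_def by auto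
  have un: "P = P1 \<union> P2" and dis: "P1 \<inter> P2 = {}" unfolding P1_def P2_def by auto
  have cP: "card P = card P1 + card P2" using card_Un_disjoint[OF fin1 fin2 dis] un by simp
  have c1: "real (card P1) \<le> sqrt y"
  proof -
    have "P1 \<subseteq> {1..nat \<lfloor>sqrt y\<rfloor>}"
    proof
      fix p assume "p \<in> P1"
      hence pp: "p*p \<le> y" "prime p" unfolding P1_def P_def by auto
      hence "real p * real p \<le> real y" by (metis of_nat_le_iff of_nat_mult)
      hence "real p \<le> sqrt y" using real_le_rsqrt[of "real p" "real y"] by (simp add: power2_eq_square)
      hence "p \<le> nat \<lfloor>sqrt y\<rfloor>" by (simp add: le_nat_floor)
      moreover have "p \<ge> 1" using pp(2) prime_ge_1_nat by blast
      ultimately show "p \<in> {1..nat \<lfloor>sqrt y\<rfloor>}" by simp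
    qed
    hence "card P1 \<le> nat \<lfloor>sqrt y\<rfloor>" using card_mono[of "{1..nat \<lfloor>sqrt y\<rfloor>}" P1] by simp
    hence "real (card P1) \<le> real (nat \<lfloor>sqrt y\<rfloor>)" by (simp only: of_nat_le_iff)
    also have "\<dots> = of_int \<lfloor>sqrt y\<rfloor>" by simp
    also have "\<dots> \<le> sqrt y" by (rule of_int_floor_le)
    finally show ?thesis .
  qed
  have lny: "ln (real y) > 0" using y2 by simp
  have c2: "real (card P2) * ln y \<le> 2 * y * ln 4"
  proof -
    have "real (card P2) * ln y = (\<Sum>p\<in>P2. ln y)" by simp
    also have "\<dots> \<le> (\<Sum>p\<in>P2. 2 * ln (real p))"
    proof (rule sum_mono)
      fix p assume "p \<in> P2"
      hence pp: "y < p*p" "prime p" unfolding P2_def P_def by auto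
      hence p0: "real p > 0" using prime_gt_0_nat by simp
      have "real y < real p * real p" using pp by (metis of_nat_less_iff of_nat_mult)
      hence "ln y < ln (real p * real p)" using y2 by (intro ln_less_cancel_iff[THEN iffD2]) auto
      also have "\<dots> = 2 * ln p" using p0 by (simp add: ln_mult)
      finally show "ln y \<le> 2 * ln (real p)" by simp
    qed
    also have "\<dots> = 2 * (\<Sum>p\<in>P2. ln (real p))" by (simp add: sum_distrib_left)
    also have "(\<Sum>p\<in>P2. ln (real p)) \<le> (\<Sum>p\<in>P. ln (real p))"
      proof (rule sum_mono2[OF finP])
      show "P2 \<subseteq> P" unfolding P2_def by auto
      fix b assume "b \<in> P - P2"
      hence "b \<ge> 1" unfolding P_def by (auto dest: prime_ge_1_nat)
      thus "0 \<le> ln (real b)" by simp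
    qed
    also have "(\<Sum>p\<in>P. ln (real p)) = ln (\<Prod>p\<in>P. real p)"
      by (rule ln_prod[symmetric]) (auto simp: P_def prime_gt_0_nat)
    also have "(\<Prod>p\<in>P. real p) = real (\<Prod>P)" by simp
    also have "ln (real (\<Prod>P)) \<le> ln (real (4^y))"
    proof -
      have "\<Prod>P \<le> 4^y" unfolding P_def by (rule primorial_le)
      moreover have "\<Prod>P > 0" using finP by (auto simp: P_def prime_gt_0_nat)
      ultimately have a: "real (\<Prod>P) \<le> real (4^y)" and b: "real (\<Prod>P) > 0"
        by (simp only: of_nat_le_iff, simp only: of_nat_0_less_iff)
      show ?thesis by (metis a b ln_le_cancel_iff less_le_trans)
    qed
    also have "ln (real (4^y)) = y * ln 4" by (simp add: ln_realpow)
    finally show ?thesis by simp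
  qed
  have "real (card P2) \<le> 2 * y * ln 4 / ln y" using c2 lny by (simp add: field_simps)
  thus ?thesis using c1 cP unfolding P_def[symmetric] by simp
qed

lemma sum_card_swap:
  assumes "finite J" "finite K"
  shows "(\<Sum>j\<in>J. card {k\<in>K. P j k}) = (\<Sum>k\<in>K. card {j\<in>J. P j k})"
proof -
  have "(\<Sum>j\<in>J. card {k\<in>K. P j k}) = (\<Sum>j\<in>J. \<Sum>k\<in>K. if P j k then 1 else 0)"
    using assms by (simp add: sum.If_cases Int_def)
  also have "\<dots> = (\<Sum>k\<in>K. \<Sum>j\<in>J. if P j k then 1 else 0)" by (rule sum.swap)
  also have "\<dots> = (\<Sum>k\<in>K. card {j\<in>J. P j k})"
    using assms by (simp add: sum.If_cases Int_def)
  finally show ?thesis .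
qed

lemma mult_le_self:
  fixes q x :: nat assumes "prime q" "x > 0"
  shows "multiplicity q x \<le> x"
proof -
  let ?v = "multiplicity q x"
  have "q^?v dvd x" by (rule multiplicity_dvd)
  hence "q^?v \<le> x" using assms by (simp add: dvd_imp_le)
  moreover have "?v < 2^?v" by (rule less_exp)
  moreover have "2^?v \<le> q^?v" using assms prime_ge_2_nat by (simp add: power_mono)
  ultimately show ?thesis by linarith
qed

lemma mult_as_card:
  fixes q x K :: nat assumes "prime q" "x > 0" "multiplicity q x \<le> K"
  shows "multiplicity q x = card {k\<in>{1..K}. q^k dvd x}"
proof -
  have "{k\<in>{1..K}. q^k dvd x} = {1..multiplicity q x}"
  proof -
    have nu: "\<not> is_unit q" using assms(1) by (simp add: prime_nat_iff)
    have iff: "q^k dvd x \<longleftrightarrow> k \<le> multiplicity q x" for k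
      using power_dvd_iff_le_multiplicity[of x q k] assms(2) nu by simp
    show ?thesis
    proof (rule set_eqI)
      fix k
      show "k \<in> {k\<in>{1..K}. q^k dvd x} \<longleftrightarrow> k \<in> {1..multiplicity q x}"
        using iff[of k] assms(3) by auto
    qed
  qed
  thus ?thesis by simp
qed

lemma ap_count:
  fixes q D M h :: nat
  assumes q1: "q \<ge> 1" and cop: "coprime q D" and hM: "(h - 1) * D \<le> M"
  shows "card {j\<in>{..<h}. q dvd (M - j*D)} \<le> h div q + 1"
proof -
  let ?J = "{j\<in>{..<h}. q dvd (M - j*D)}"
  have key: "j1 mod q = j2 mod q" if "j1 \<in> ?J" "j2 \<in> ?J" for j1 j2
  proof -
    have j: "j1 < h" "j2 < h" "q dvd (M - j1*D)" "q dvd (M - j2*D)" using that by auto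
    have le1: "j1 * D \<le> M"
    proof -
      have "j1 * D \<le> (h - 1) * D" using j(1) by (intro mult_le_mono1) simp
      thus ?thesis using hM by (rule le_trans)
    qed
    have le2: "j2 * D \<le> M"
    proof -
      have "j2 * D \<le> (h - 1) * D" using j(2) by (intro mult_le_mono1) simp
      thus ?thesis using hM by (rule le_trans)
    qed
    have i1: "int q dvd int M - int j1 * int D" using j(3) le1 by (metis int_dvd_int_iff of_nat_diff of_nat_mult)
    have i2: "int q dvd int M - int j2 * int D" using j(4) le2 by (metis int_dvd_int_iff of_nat_diff of_nat_mult)
    have "int q dvd (int M - int j1 * int D) - (int M - int j2 * int D)" using i1 i2 by (rule dvd_diff)
    hence "int q dvd (int j2 - int j1) * int D" by (simp add: algebra_simps)
    moreover have "coprime (int q) (int D)" using cop by simp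
    ultimately have "int q dvd (int j2 - int j1)" using coprime_dvd_mult_left_iff by blast
    hence "int q dvd int j1 - int j2" by (simp add: dvd_diff_commute)
    hence "int j1 mod int q = int j2 mod int q" by (simp add: mod_eq_dvd_iff)
    thus ?thesis by (metis of_nat_eq_iff zmod_int)
  qed
  have inj: "inj_on (\<lambda>j. j div q) ?J"
  proof (rule inj_onI)
    fix j1 j2 assume a: "j1 \<in> ?J" and b: "j2 \<in> ?J" and c: "j1 div q = j2 div q"
    have m: "j1 mod q = j2 mod q" using key[OF a b] .
    have "j1 = j1 div q * q + j1 mod q" by simp
    also have "\<dots> = j2 div q * q + j2 mod q" using c m by simp
    also have "\<dots> = j2" by simp
    finally show "j1 = j2" .
  qed
  have "(\<lambda>j. j div q) ` ?J \<subseteq> {..(h - 1) div q}"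
    by (auto intro: div_le_mono)
  hence "card ?J \<le> card {..(h - 1) div q}" using card_inj_on_le[OF inj] by blast
  also have "\<dots> = (h - 1) div q + 1" by simp
  also have "\<dots> \<le> h div q + 1" by (simp add: div_le_mono)
  finally show ?thesis .
qed

lemma mult_count:
  fixes q h :: nat assumes "q \<ge> 1"
  shows "h div q \<le> card {m\<in>{1..h}. q dvd m}"
proof -
  have "(\<lambda>k. k*q) ` {1..h div q} \<subseteq> {m\<in>{1..h}. q dvd m}"
  proof
    fix m assume "m \<in> (\<lambda>k. k*q) ` {1..h div q}"
    then obtain k where k: "k \<in> {1..h div q}" "m = k*q" by auto
    have "k * q \<le> (h div q) * q" using k by simp
    also have "\<dots> \<le> h" by simp
    finally show "m \<in> {m\<in>{1..h}. q dvd m}" using k assms by auto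
  qed
  moreover have "inj_on (\<lambda>k. k*q) {1..h div q}" using assms by (auto simp: inj_on_def)
  ultimately have "card ((\<lambda>k. k*q) ` {1..h div q}) \<le> card {m\<in>{1..h}. q dvd m}"
    and inj: "inj_on (\<lambda>k. k*q) {1..h div q}"
    by (simp_all add: card_mono)
  hence "card {1..h div q} \<le> card {m\<in>{1..h}. q dvd m}" by (simp add: card_image)
  thus ?thesis by simp
qed

lemma val_sum_bound:
  fixes q D M h :: nat
  assumes q: "prime q" and h1: "h \<ge> 1" and D1: "D \<ge> 1" and cop: "coprime M D"
    and big: "(2*h - 1) * D \<le> M"
  shows "(\<Sum>j<h. multiplicity q (M - j*D)) \<le> multiplicity q (fact h) + card {k\<in>{1..M}. q^k \<le> M}"
proof -
  define e where "e = (\<lambda>j. M - j*D)"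
  have hM: "h \<le> M"
  proof -
    have "h \<le> 2*h - 1" using h1 by simp
    also have "\<dots> \<le> (2*h-1)*D" using D1 by simp
    also have "\<dots> \<le> M" by (rule big)
    finally show ?thesis .
  qed
  have jD: "j * D \<le> M" if "j < h" for j
  proof -
    have "j * D \<le> (2*h - 1) * D" using that by (intro mult_le_mono1) simp
    thus ?thesis using big by (rule le_trans)
  qed
  have epos: "e j > 0" if "j < h" for j
  proof -
    have "j * D + D \<le> (2*h-1)*D" using that h1
    proof -
      have "(j+1) * D \<le> (2*h-1)*D" using that by (intro mult_le_mono1) simp
      thus ?thesis by (simp add: algebra_simps)
    qed
    thus ?thesis using big D1 unfolding e_def by linarith
  qed
  have ele: "e j \<le> M" for j unfolding e_def by simp
  have copj: "coprime (e j) D" if "j < h" for j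
  proof (rule coprimeI)
    fix c assume c1: "c dvd e j" and c2: "c dvd D"
    have "c dvd e j + j * D" using c1 c2 by simp
    also have "e j + j * D = M" using jD[OF that] unfolding e_def by simp
    finally have "c dvd M" .
    thus "is_unit c" using c2 cop coprime_common_divisor by blast
  qed
  define K where "K = {k\<in>{1..M}. q^k \<le> M}"
  have "(\<Sum>j<h. multiplicity q (e j)) = (\<Sum>j<h. card {k\<in>{1..M}. q^k dvd e j})"
  proof (rule sum.cong[OF refl])
    fix j assume "j \<in> {..<h}"
    hence "e j > 0" using epos by simp
    moreover have "multiplicity q (e j) \<le> M" using mult_le_self[OF q \<open>e j > 0\<close>] ele[of j] by linarith
    ultimately show "multiplicity q (e j) = card {k\<in>{1..M}. q^k dvd e j}"
      using mult_as_card[OF q] by blast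
  qed
  also have "\<dots> = (\<Sum>k\<in>{1..M}. card {j\<in>{..<h}. q^k dvd e j})"
    by (rule sum_card_swap) auto
  also have "\<dots> \<le> (\<Sum>k\<in>{1..M}. card {m\<in>{1..h}. q^k dvd m} + (if q^k \<le> M then 1 else 0))"
  proof (rule sum_mono)
    fix k assume k: "k \<in> {1..M}"
    show "card {j\<in>{..<h}. q^k dvd e j} \<le> card {m\<in>{1..h}. q^k dvd m} + (if q^k \<le> M then 1 else 0)"
    proof (cases "q^k \<le> M \<and> \<not> q dvd D")
      case True
      have qk1: "q^k \<ge> 1" using prime_gt_0_nat[OF q] by (simp add: Suc_le_eq)
      have "coprime q D" using True q by (simp add: prime_imp_coprime)
      hence "coprime (q^k) D" by simp
      moreover have "(h - 1) * D \<le> M"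
      proof -
        have "(h - 1) * D \<le> (2*h-1)*D" by (intro mult_le_mono1) simp
        thus ?thesis using big by linarith
      qed
      ultimately have "card {j\<in>{..<h}. q^k dvd e j} \<le> h div q^k + 1"
        unfolding e_def using ap_count qk1 by blast
      also have "h div q^k \<le> card {m\<in>{1..h}. q^k dvd m}" by (rule mult_count[OF qk1])
      finally show ?thesis using True by simp
    next
      case False
      have "{j\<in>{..<h}. q^k dvd e j} = {}"
      proof (rule ccontr)
        assume "{j\<in>{..<h}. q^k dvd e j} \<noteq> {}"
        then obtain j where j: "j < h" "q^k dvd e j" by auto
        have "q^k \<le> e j" using j epos dvd_imp_le by blast
        hence "q^k \<le> M" using ele[of j] by linarith
        hence "q dvd D" using False by simp
        moreover have "q dvd q^k" using k by (cases k) auto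
        hence "q dvd e j" using j(2) by (rule dvd_trans)
        ultimately have "q dvd gcd (e j) D" by simp
        hence "q dvd 1" using copj[OF j(1)] by simp
        thus False using q by simp
      qed
      thus ?thesis by (metis card.empty zero_le)
    qed
  qed
  also have "\<dots> = (\<Sum>k\<in>{1..M}. card {m\<in>{1..h}. q^k dvd m}) + card K"
    by (simp add: sum.distrib K_def sum.If_cases Int_def)
  also have "(\<Sum>k\<in>{1..M}. card {m\<in>{1..h}. q^k dvd m}) = (\<Sum>m\<in>{1..h}. card {k\<in>{1..M}. q^k dvd m})"
    by (rule sum_card_swap[symmetric]) auto
  also have "\<dots> = (\<Sum>m\<in>{1..h}. multiplicity q m)"
  proof (rule sum.cong[OF refl])
    fix m assume m: "m \<in> {1..h}"
    hence "m > 0" by simp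
    moreover have "multiplicity q m \<le> M" using mult_le_self[OF q \<open>m > 0\<close>] m hM by simp
    ultimately show "card {k\<in>{1..M}. q^k dvd m} = multiplicity q m"
      using mult_as_card[OF q] by metis
  qed
  also have "\<dots> = multiplicity q (fact h :: nat)"
  proof -
    have "(fact h :: nat) = \<Prod>{1..h}" by (simp add: fact_prod)
    also have "multiplicity q (\<Prod>{1..h}) = (\<Sum>m\<in>{1..h}. multiplicity q m)"
      by (rule prime_elem_multiplicity_prod_distrib) (use q in auto)
    finally show ?thesis by simp
  qed
  finally show ?thesis unfolding e_def K_def .
qed

lemma pow_card_le:
  fixes p M :: nat assumes "p \<ge> 1" "M \<ge> 1"
  shows "p ^ card {k\<in>{1..M}. p^k \<le> M} \<le> M"
proof (cases "{k\<in>{1..M}. p^k \<le> M} = {}")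
  case True
  hence "card {k\<in>{1..M}. p^k \<le> M} = 0" by (metis card.empty)
  thus ?thesis using assms by (metis power_0)
next
  case False
  let ?S = "{k\<in>{1..M}. p^k \<le> M}"
  have fin: "finite ?S" by simp
  let ?m = "Max ?S"
  have mS: "?m \<in> ?S" using Max_in[OF fin False] .
  have "?S \<subseteq> {1..?m}" using Max_ge[OF fin] by auto
  hence "card ?S \<le> ?m" using card_mono[of "{1..?m}" ?S] by simp
  hence "p ^ card ?S \<le> p ^ ?m" using assms by (simp add: power_increasing)
  also have "\<dots> \<le> M" using mS by simp
  finally show ?thesis .
qed

lemma star_dvd:
  fixes h D M y :: nat
  assumes h1: "h \<ge> 1" and D1: "D \<ge> 1" and cop: "coprime M D" and big: "(2*h - 1) * D \<le> M"
  shows "(\<Prod>j<h. M - j*D) dvd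
    fact h * (\<Prod>p\<in>{p. prime p \<and> p \<le> y}. p ^ card {k\<in>{1..M}. p^k \<le> M})
      * (\<Prod>j\<in>{j\<in>{..<h}. \<exists>p. prime p \<and> y < p \<and> p dvd (M - j*D)}. M - j*D)"
proof -
  define e where "e = (\<lambda>j. M - j*D)"
  define R where "R = {j\<in>{..<h}. \<exists>p. prime p \<and> y < p \<and> p dvd e j}"
  define P where "P = {p::nat. prime p \<and> p \<le> y}"
  define Kf where "Kf = (\<lambda>p::nat. card {k\<in>{1..M}. p^k \<le> M})"
  have finP: "finite P" unfolding P_def by (rule finite_subset[of _ "{..y}"]) auto
  have epos: "e j > 0" if "j < h" for j
  proof -
    have "(j+1) * D \<le> (2*h-1)*D" using that by (intro mult_le_mono1) simp
    hence "j * D + D \<le> (2*h-1)*D" by (simp add: algebra_simps)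
    thus ?thesis using big D1 unfolding e_def by linarith
  qed
  have ne1: "0 \<notin> e ` {..<h}"
  proof
    assume "0 \<in> e ` {..<h}"
    then obtain j where "j < h" "e j = 0" by auto
    thus False using epos[of j] by simp
  qed
  have ne2: "0 \<notin> e ` R"
  proof
    assume "0 \<in> e ` R"
    then obtain j where "j \<in> R" "e j = 0" by auto
    hence "j < h" "e j = 0" unfolding R_def by auto
    thus False using epos[of j] by simp
  qed
  have ne3: "0 \<notin> (\<lambda>p. p ^ Kf p) ` P"
  proof
    assume "0 \<in> (\<lambda>p. p ^ Kf p) ` P"
    then obtain p where "p \<in> P" "p ^ Kf p = 0" by auto
    hence "prime p" "p = 0" unfolding P_def by auto
    thus False by simp
  qed
  have nzL: "(\<Prod>j<h. e j) \<noteq> 0"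
  proof -
    have "(\<Prod>j<h. e j) > 0" using epos by (intro prod_pos) simp
    thus ?thesis by simp
  qed
  have nzA: "(\<Prod>p\<in>P. p ^ Kf p) \<noteq> 0"
  proof -
    have "(\<Prod>p\<in>P. p ^ Kf p) > 0" unfolding P_def by (intro prod_pos) (simp add: prime_gt_0_nat)
    thus ?thesis by simp
  qed
  have nzR: "(\<Prod>j\<in>R. e j) \<noteq> 0"
  proof -
    have "(\<Prod>j\<in>R. e j) > 0" using epos unfolding R_def by (intro prod_pos) simp
    thus ?thesis by simp
  qed
  have finR: "finite R" unfolding R_def by simp
  have "(\<Prod>j<h. e j) dvd fact h * (\<Prod>p\<in>P. p ^ Kf p) * (\<Prod>j\<in>R. e j)"
  proof (rule multiplicity_le_imp_dvd[OF nzL])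
    fix q :: nat assume q: "prime q"
    have mL: "multiplicity q (\<Prod>j<h. e j) = (\<Sum>j<h. multiplicity q (e j))"
      by (rule prime_elem_multiplicity_prod_distrib) (use q ne1 in auto)
    have mR0: "multiplicity q (fact h * (\<Prod>p\<in>P. p ^ Kf p) * (\<Prod>j\<in>R. e j))
        = multiplicity q (fact h :: nat) + multiplicity q (\<Prod>p\<in>P. p ^ Kf p) + multiplicity q (\<Prod>j\<in>R. e j)"
      using q nzA nzR by (simp add: prime_elem_multiplicity_mult_distrib)
    have mR: "multiplicity q (\<Prod>j\<in>R. e j) = (\<Sum>j\<in>R. multiplicity q (e j))"
      by (rule prime_elem_multiplicity_prod_distrib) (use q ne2 finR in auto)
    show "multiplicity q (\<Prod>j<h. e j) \<le> multiplicity q (fact h * (\<Prod>p\<in>P. p ^ Kf p) * (\<Prod>j\<in>R. e j))"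
    proof (cases "q \<le> y")
      case True
      have "multiplicity q (\<Prod>p\<in>P. p ^ Kf p) = (\<Sum>p\<in>P. multiplicity q (p ^ Kf p))"
        by (rule prime_elem_multiplicity_prod_distrib) (use q ne3 finP in auto)
      also have "\<dots> = (\<Sum>p\<in>P. if p = q then Kf q else 0)"
      proof (rule sum.cong[OF refl])
        fix p assume "p \<in> P"
        hence pp: "prime p" unfolding P_def by simp
        show "multiplicity q (p ^ Kf p) = (if p = q then Kf q else 0)"
        proof (cases "p = q")
          case True thus ?thesis using q by (simp add: multiplicity_same_power)
        next
          case False
          have "multiplicity q (p ^ Kf p) = Kf p * multiplicity q p"
            using q pp by (simp add: prime_elem_multiplicity_power_distrib prime_gt_0_nat)
          also have "multiplicity q p = 0" using q pp False by (simp add: prime_multiplicity_other)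
          finally show ?thesis using False by simp
        qed
      qed
      also have "\<dots> = Kf q" using finP True q by (simp add: P_def)
      finally have mA: "multiplicity q (\<Prod>p\<in>P. p ^ Kf p) = Kf q" .
      have "(\<Sum>j<h. multiplicity q (e j)) \<le> multiplicity q (fact h) + Kf q"
        unfolding e_def Kf_def by (rule val_sum_bound[OF q h1 D1 cop big])
      thus ?thesis using mL mR0 mA by simp
    next
      case False
      have "(\<Sum>j<h. multiplicity q (e j)) = (\<Sum>j\<in>R. multiplicity q (e j))"
      proof (rule sum.mono_neutral_right)
        show "finite {..<h}" by simp
        show "R \<subseteq> {..<h}" unfolding R_def by auto
        show "\<forall>j\<in>{..<h} - R. multiplicity q (e j) = 0"
        proof
          fix j assume j: "j \<in> {..<h} - R"
          hence "\<not> q dvd e j" using False q unfolding R_def by auto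
          thus "multiplicity q (e j) = 0" by (simp add: not_dvd_imp_multiplicity_0)
        qed
      qed
      thus ?thesis using mL mR0 mR by simp
    qed
  qed
  thus ?thesis unfolding e_def R_def P_def Kf_def .
qed

lemma core_ineq:
  fixes h D M y :: nat
  assumes h1: "h \<ge> 1" and D1: "D \<ge> 1" and cop: "coprime M D" and big: "(2*h - 1) * D \<le> M"
  defines "R \<equiv> {j\<in>{..<h}. \<exists>p. prime p \<and> y < p \<and> p dvd (M - j*D)}"
  defines "\<pi> \<equiv> card {p::nat. prime p \<and> p \<le> y}"
  shows "(2::nat)^(h div 2) \<le> M^(\<pi> + card R)"
    and "(real M / 2)^h \<le> real h ^ h * real M ^ (\<pi> + card R)"
proof -
  define e where "e = (\<lambda>j. M - j*D)"
  define P where "P = {p::nat. prime p \<and> p \<le> y}"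
  define Kf where "Kf = (\<lambda>p::nat. card {k\<in>{1..M}. p^k \<le> M})"
  have finP: "finite P" unfolding P_def by (rule finite_subset[of _ "{..y}"]) auto
  have finR: "finite R" unfolding R_def by simp
  have M1: "M \<ge> 1"
  proof -
    have "1 \<le> (2*h-1)*D" using h1 D1 by simp
    thus ?thesis using big by linarith
  qed
  have eq_e: "e j + j * D = M" and elow: "(2*h - 1 - j) * D \<le> e j" if "j < h" for j
  proof -
    have jd: "j * D \<le> (2*h-1)*D" using that by (intro mult_le_mono1) simp
    have jM: "j * D \<le> M" using jd big by (rule le_trans)
    thus "e j + j * D = M" unfolding e_def by simp
    have s1: "(2*h - 1 - j) + j = 2*h-1" using that by simp
    have "(2*h - 1 - j) * D + j * D = ((2*h - 1 - j) + j) * D" by (simp add: add_mult_distrib)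
    also have "\<dots> = (2*h-1)*D" using s1 by simp
    finally have "(2*h - 1 - j) * D + j * D = (2*h-1)*D" .
    thus "(2*h - 1 - j) * D \<le> e j" using big jd unfolding e_def by linarith
  qed
  have ele: "e j \<le> M" for j unfolding e_def by simp
  have epos0: "e j > 0" if "j < h" for j
  proof -
    have "1 \<le> 2*h - 1 - j" using that by simp
    hence "1 * 1 \<le> (2*h - 1 - j) * D" using D1 by (intro mult_le_mono) auto
    thus ?thesis using elow[OF that] by linarith
  qed
  have L_le: "(\<Prod>j<h. e j) \<le> fact h * M^\<pi> * M^(card R)"
  proof -
    have d: "(\<Prod>j<h. e j) dvd fact h * (\<Prod>p\<in>P. p ^ Kf p) * (\<Prod>j\<in>R. e j)"
      unfolding e_def P_def Kf_def R_def by (rule star_dvd[OF h1 D1 cop big])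
    have A: "(\<Prod>p\<in>P. p ^ Kf p) \<le> (\<Prod>p\<in>P. M)"
    proof (rule prod_mono)
      fix p assume "p \<in> P"
      hence "p \<ge> 1" unfolding P_def using prime_ge_1_nat by blast
      thus "0 \<le> p ^ Kf p \<and> p ^ Kf p \<le> M" unfolding Kf_def using pow_card_le M1 by simp
    qed
    have B: "(\<Prod>j\<in>R. e j) \<le> (\<Prod>j\<in>R. M)" by (rule prod_mono) (simp add: ele)
    have pos: "0 < fact h * (\<Prod>p\<in>P. p ^ Kf p) * (\<Prod>j\<in>R. e j)"
    proof -
      have "(\<Prod>p\<in>P. p ^ Kf p) > 0" using finP unfolding P_def by (auto intro!: prod_pos simp: prime_gt_0_nat)
      moreover have "(\<Prod>j\<in>R. e j) > 0" using finR unfolding R_def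
        by (intro prod_pos) (use epos0 in auto)
      ultimately show ?thesis by simp
    qed
    have "(\<Prod>j<h. e j) \<le> fact h * (\<Prod>p\<in>P. p ^ Kf p) * (\<Prod>j\<in>R. e j)"
      using d pos by (simp add: dvd_imp_le)
    also have "\<dots> \<le> fact h * (\<Prod>p\<in>P. M) * (\<Prod>j\<in>R. M)"
      using A B by (intro mult_mono) auto
    also have "\<dots> = fact h * M^\<pi> * M^(card R)" unfolding \<pi>_def P_def by simp
    finally show ?thesis .
  qed
  show "(2::nat)^(h div 2) \<le> M^(\<pi> + card R)"
  proof -
    define f where "f = (\<lambda>j::nat. if 2*(j+1) \<le> h then (2::nat) else 1)"
    have "(\<Prod>j<h. Suc j * f j) \<le> (\<Prod>j<h. e j)"
    proof (rule prod_mono)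
      fix j assume j: "j \<in> {..<h}"
      have "2*h - 1 - j \<le> (2*h - 1 - j) * D" using D1 by simp
      hence a: "2*h - 1 - j \<le> e j" using elow j by (meson le_trans lessThan_iff)
      show "0 \<le> Suc j * f j \<and> Suc j * f j \<le> e j"
      proof (cases "2*(j+1) \<le> h")
        case True thus ?thesis using a unfolding f_def by simp
      next
        case False thus ?thesis using a j unfolding f_def by simp
      qed
    qed
    moreover have "(\<Prod>j<h. Suc j * f j) = fact h * 2^(h div 2)"
    proof -
      have "(\<Prod>j<h. Suc j * f j) = (\<Prod>j<h. Suc j) * (\<Prod>j<h. f j)" by (rule prod.distrib)
      also have "(\<Prod>j<h. Suc j) = fact h" by (simp add: fact_prod_Suc lessThan_atLeast0)
      also have "(\<Prod>j<h. f j) = (\<Prod>j<h div 2. 2)"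
      proof -
        have "(\<Prod>j<h. f j) = (\<Prod>j\<in>{..<h} \<inter> {j. 2*(j+1) \<le> h}. 2) * (\<Prod>j\<in>{..<h} \<inter> - {j. 2*(j+1) \<le> h}. 1)"
          unfolding f_def by (rule prod.If_cases) simp
        also have "{..<h} \<inter> {j. 2*(j+1) \<le> h} = {..<h div 2}" by auto
        finally show ?thesis by simp
      qed
      finally show ?thesis by simp
    qed
    ultimately have "fact h * 2^(h div 2) \<le> fact h * M^\<pi> * M^(card R)" using L_le by linarith
    hence "fact h * 2^(h div 2) \<le> fact h * M^(\<pi> + card R)" by (simp add: power_add mult.assoc)
    thus ?thesis by simp
  qed
  show "(real M / 2)^h \<le> real h ^ h * real M ^ (\<pi> + card R)"
  proof -
    have "(real M / 2)^h = (\<Prod>j<h. real M / 2)" by simp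
    also have "\<dots> \<le> (\<Prod>j<h. real (e j))"
    proof (rule prod_mono)
      fix j assume j: "j \<in> {..<h}"
      have "2 * (j * D) \<le> (2*h-1) * D" using j
      proof -
        have "2 * j \<le> 2*h - 1" using j by simp
        hence "2 * j * D \<le> (2*h-1) * D" by (rule mult_le_mono1)
        thus ?thesis by simp
      qed
      moreover have jlt: "j < h" using j by simp
      ultimately have "M \<le> 2 * e j" using eq_e[OF jlt] big by linarith
      thus "0 \<le> real M / 2 \<and> real M / 2 \<le> real (e j)" by simp
    qed
    also have "\<dots> = real (\<Prod>j<h. e j)" by simp
    also have "\<dots> \<le> real (fact h * M^\<pi> * M^(card R))" using L_le by (simp only: of_nat_le_iff)
    also have "\<dots> = fact h * real M ^ (\<pi> + card R)" by (simp add: power_add)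
    also have "\<dots> \<le> real (h^h) * real M ^ (\<pi> + card R)"
      by (intro mult_right_mono fact_le_power) simp
    finally show ?thesis by simp
  qed
qed

lemma lonely:
  fixes h D M y j l p :: nat
  assumes D1: "D \<ge> 1" and cop: "coprime M D" and big: "(2*h - 1) * D \<le> M"
    and j: "j < h" and l: "l < h" and jl: "j \<noteq> l"
    and wj: "w \<le> j" "j < w + y" and wl: "w \<le> l" "l < w + y"
    and p: "prime p" "y < p" "p dvd (M - j*D)"
  shows "\<not> p dvd (M - l*D)"
proof
  assume pl: "p dvd (M - l*D)"
  have jD: "i * D \<le> M" if "i < h" for i
  proof -
    have "i * D \<le> (2*h-1)*D" using that by (intro mult_le_mono1) simp
    thus ?thesis using big by linarith
  qed
  have i1: "int p dvd int M - int j * int D" using p(3) jD[OF j] by (metis int_dvd_int_iff of_nat_diff of_nat_mult)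
  have i2: "int p dvd int M - int l * int D" using pl jD[OF l] by (metis int_dvd_int_iff of_nat_diff of_nat_mult)
  have "int p dvd (int M - int l * int D) - (int M - int j * int D)" using i2 i1 by (rule dvd_diff)
  hence d: "int p dvd (int j - int l) * int D" by (simp add: algebra_simps)
  have "\<not> p dvd D"
  proof
    assume "p dvd D"
    hence "p dvd j * D" by simp
    hence "p dvd (M - j*D) + j * D" using p(3) by simp
    also have "(M - j*D) + j * D = M" using jD[OF j] by simp
    finally have "p dvd M" .
    with \<open>p dvd D\<close> cop have "is_unit p" using coprime_common_divisor by blast
    thus False using p(1) by simp
  qed
  hence "coprime (int p) (int D)" using p(1) by (simp add: prime_imp_coprime)
  hence "int p dvd int j - int l" using d coprime_dvd_mult_left_iff by blast
  hence "int p dvd \<bar>int j - int l\<bar>" by simp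
  moreover have "\<bar>int j - int l\<bar> > 0" using jl by simp
  ultimately have "int p \<le> \<bar>int j - int l\<bar>" by (simp add: zdvd_imp_le)
  moreover have "\<bar>int j - int l\<bar> < int y" using wj wl by linarith
  ultimately show False using p(2) by linarith
qed

lemma window_exists:
  fixes R :: "nat set" and h y :: nat
  assumes R: "R \<subseteq> {..<h}" and y: "y \<ge> 1"
  shows "\<exists>w. card R \<le> card {j\<in>R. w \<le> j \<and> j < w + y} * (h div y + 1)"
proof (rule ccontr)
  assume "\<not> ?thesis"
  hence lt: "card {j\<in>R. w \<le> j \<and> j < w + y} * (h div y + 1) < card R" for w using not_le by blast
  let ?W = "\<lambda>i. {j\<in>R. i*y \<le> j \<and> j < i*y + y}"
  have finR: "finite R" using R finite_subset by blast
  have "R \<subseteq> (\<Union>i\<in>{..h div y}. ?W i)"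
  proof
    fix j assume jR: "j \<in> R"
    hence "j < h" using R by auto
    have a: "(j div y) * y \<le> j" using div_mult_mod_eq[of j y] by linarith
    have b: "j < (j div y) * y + y"
      using y div_mult_mod_eq[of j y] mod_less_divisor[of y j] by linarith
    have "j div y \<le> h div y" using \<open>j < h\<close> by (simp add: div_le_mono)
    thus "j \<in> (\<Union>i\<in>{..h div y}. ?W i)" using jR a b by blast
  qed
  hence "card R \<le> card (\<Union>i\<in>{..h div y}. ?W i)"
    by (intro card_mono) (auto intro: finite_subset[OF _ finR])
  also have "\<dots> \<le> (\<Sum>i\<in>{..h div y}. card (?W i))" by (rule card_UN_le) simp
  finally have c: "card R * (h div y + 1) \<le> (\<Sum>i\<in>{..h div y}. card (?W i)) * (h div y + 1)" by (rule mult_le_mono1)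
  also have "\<dots> = (\<Sum>i\<in>{..h div y}. card (?W i) * (h div y + 1))" by (rule sum_distrib_right)
  also have "\<dots> < (\<Sum>i\<in>{..h div y}. card R)"
    by (rule sum_strict_mono) (use lt in auto)
  also have "\<dots> = card R * (h div y + 1)" by simp
  finally show False by simp
qed

lemma ln2_half: "ln (2::real) \<ge> 1/2"
proof -
  have "exp (1/2::real) \<le> 2"
  proof -
    have "exp (1/2::real) ^ 2 = exp 1" by (simp add: exp_double[symmetric])
    also have "\<dots> \<le> 4" using exp_le by simp
    finally have "exp (1/2::real)^2 \<le> 2^2" by simp
    thus ?thesis by (rule power2_le_imp_le) simp
  qed
  thus ?thesis by (metis exp_gt_zero exp_ln ln_le_cancel_iff zero_less_numeral ln_exp)
qed

lemma S_bound:
  fixes h M S :: nat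
  assumes h5: "h \<ge> 5"
    and a: "(2::nat)^(h div 2) \<le> M^S"
    and b: "(real M / 2)^h \<le> real h ^ h * real M ^ S"
  shows "real S \<ge> real h / (20 * ln (2 * real h))"
proof -
  have l2: "ln (2::real) \<ge> 1/2" by (rule ln2_half)
  have hpos: "real h > 0" using h5 by simp
  have l2h: "ln (2 * real h) \<ge> ln 2" using h5 by simp
  have l2hpos: "ln (2 * real h) > 0" using h5 by simp
  have M2: "M \<ge> 2"
  proof (rule ccontr)
    assume "\<not> M \<ge> 2"
    hence "M \<le> 1" by simp
    hence "M = 0 \<or> M = 1" by auto
    hence "M^S \<le> 1" by (cases S) auto
    moreover have "(2::nat)^(h div 2) \<ge> 2^2" using h5 by (intro power_increasing) auto
    ultimately show False using a by simp
  qed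
  have lM: "ln (real M) > 0" using M2 by simp
  have A: "real (h div 2) * ln 2 \<le> real S * ln (real M)"
  proof -
    have "real ((2::nat)^(h div 2)) \<le> real (M^S)" using a by (simp only: of_nat_le_iff)
    hence "(2::real)^(h div 2) \<le> real M ^ S" by simp
    hence "ln ((2::real)^(h div 2)) \<le> ln (real M ^ S)" using M2 by (subst ln_le_cancel_iff) auto
    thus ?thesis using M2 by (simp add: ln_realpow)
  qed
  have B: "real h * (ln (real M) - ln 2) \<le> real h * ln (real h) + real S * ln (real M)"
  proof -
    have "ln ((real M / 2)^h) \<le> ln (real h ^ h * real M ^ S)"
      using b M2 h5 by (subst ln_le_cancel_iff) auto
    thus ?thesis using M2 h5 by (simp add: ln_realpow ln_mult ln_div)
  qed
  have hd: "real (h div 2) \<ge> (real h - 1) / 2"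
  proof -
    define k where "k = h div 2"
    have "h \<le> 2 * k + 1" unfolding k_def using div_mult_mod_eq[of h 2] mod_less_divisor[of 2 h] by linarith
    hence "real h \<le> 2 * real k + 1" by linarith
    hence "(real h - 1) / 2 \<le> real k" by (simp add: field_simps)
    thus ?thesis unfolding k_def .
  qed
  show ?thesis
  proof (cases "ln (real M) \<le> 4 * ln (2 * real h)")
    case True
    have "(real h - 1) / 2 * (1/2) \<le> real (h div 2) * ln 2"
      using hd l2 by (intro mult_mono) auto
    also have "\<dots> \<le> real S * ln (real M)" by (rule A)
    also have "\<dots> \<le> real S * (4 * ln (2 * real h))" using True by (intro mult_left_mono) auto
    finally have "(real h - 1) / 4 \<le> real S * (4 * ln (2 * real h))" by simp
    hence "real h / (20 * ln (2 * real h)) \<le> real S"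
      using l2hpos h5 by (simp add: field_simps)
    thus ?thesis by simp
  next
    case False
    have "ln 2 + ln (real h) = ln (2 * real h)" using hpos by (simp add: ln_mult)
    hence c1: "3/4 * ln (real M) \<le> ln (real M) - ln 2 - ln (real h)" using False by linarith
    have "real h * (3/4 * ln (real M)) \<le> real h * (ln (real M) - ln 2 - ln (real h))"
      using c1 hpos by (intro mult_left_mono) auto
    also have "\<dots> = real h * (ln (real M) - ln 2) - real h * ln (real h)" by (simp add: algebra_simps)
    also have "\<dots> \<le> real S * ln (real M)" using B by linarith
    finally have "real h * (3/4 * ln (real M)) \<le> real S * ln (real M)" .
    hence "real h * (3/4) \<le> real S" using lM by (simp add: mult.commute mult.left_commute)
    moreover have "real h / (20 * ln (2 * real h)) \<le> real h * (3/4)"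
    proof -
      have "real h / (20 * ln (2 * real h)) \<le> real h / (20 * (1/2))"
      proof -
        have "ln (2 * real h) \<ge> 1/2" using l2h l2 by linarith
        thus ?thesis using hpos by (intro divide_left_mono) auto
      qed
      thus ?thesis using hpos by simp
    qed
    ultimately show ?thesis by simp
  qed
qed

lemma asym_ev: "eventually (\<lambda>h::real. sqrt (h/1024) + 2*(h/1024)*2/ln (h/2048) \<le> h/(40*ln(2*h))) at_top"
  by real_asymp

lemma asym: "\<exists>H::nat. \<forall>h::nat. h \<ge> H \<longrightarrow> sqrt (real h/1024) + 2*(real h/1024)*2/ln (real h/2048) \<le> real h/(40*ln(2*real h))"
proof -
  obtain X where X: "\<And>x::real. x \<ge> X \<Longrightarrow> sqrt (x/1024) + 2*(x/1024)*2/ln (x/2048) \<le> x/(40*ln(2*x))"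
    using asym_ev unfolding eventually_at_top_linorder by blast
  show ?thesis
  proof (intro exI allI impI)
    fix h :: nat assume "h \<ge> nat \<lceil>X\<rceil>"
    hence "real h \<ge> X" by linarith
    thus "sqrt (real h/1024) + 2*(real h/1024)*2/ln (real h/2048) \<le> real h/(40*ln(2*real h))" by (rule X)
  qed
qed

lemma ln4_le2: "ln (4::real) \<le> 2"
proof -
  have "(4::real) \<le> exp 2"
  proof -
    have "(2::real) \<le> exp 1" using exp_ge_add_one_self[of 1] by simp
    hence "(2::real)*2 \<le> exp 1 * exp 1" by (intro mult_mono) auto
    moreover have "exp (2::real) = exp 1 * exp 1" using exp_add[of 1 1] by simp
    ultimately show ?thesis by simp
  qed
  thus ?thesis by (metis exp_gt_zero ln_exp ln_le_cancel_iff zero_less_numeral)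
qed

lemma core_main:
  "\<exists>H::nat. H \<ge> 4096 \<and> (\<forall>h D M :: nat. h \<ge> H \<and> D \<ge> 1 \<and> coprime M D \<and> (2*h - 1) * D \<le> M \<longrightarrow>
     (\<exists>\<Lambda> P. \<Lambda> \<subseteq> {..<h} \<and> real h \<le> real (card \<Lambda>) * (81960 * ln (2 * real h)) \<and>
        (\<forall>k\<in>\<Lambda>. prime (P k) \<and> P k dvd (M - k*D) \<and> (\<forall>l\<in>\<Lambda>. l \<noteq> k \<longrightarrow> \<not> P k dvd (M - l*D)))))"
proof -
  obtain H0 where H0: "\<And>h::nat. h \<ge> H0 \<Longrightarrow> sqrt (real h/1024) + 2*(real h/1024)*2/ln (real h/2048) \<le> real h/(40*ln(2*real h))"
    using asym by blast
  define H where "H = max H0 4096"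
  have "\<forall>h D M :: nat. h \<ge> H \<and> D \<ge> 1 \<and> coprime M D \<and> (2*h - 1) * D \<le> M \<longrightarrow>
     (\<exists>\<Lambda> P. \<Lambda> \<subseteq> {..<h} \<and> real h \<le> real (card \<Lambda>) * (81960 * ln (2 * real h)) \<and>
        (\<forall>k\<in>\<Lambda>. prime (P k) \<and> P k dvd (M - k*D) \<and> (\<forall>l\<in>\<Lambda>. l \<noteq> k \<longrightarrow> \<not> P k dvd (M - l*D))))"
  proof (intro allI impI, elim conjE)
    fix h D M :: nat
    assume hH: "h \<ge> H" and D1: "D \<ge> 1" and cop: "coprime M D" and big: "(2*h - 1) * D \<le> M"
    have h4: "h \<ge> 4096" and hH0: "h \<ge> H0" using hH unfolding H_def by auto
    have h1: "h \<ge> 1" using h4 by simp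
    define y where "y = h div 1024"
    define R where "R = {j\<in>{..<h}. \<exists>p. prime p \<and> y < p \<and> p dvd (M - j*D)}"
    define \<pi> where "\<pi> = card {p::nat. prime p \<and> p \<le> y}"
    have yup: "real y \<le> real h / 1024" unfolding y_def by (simp add: real_of_nat_div)
    have ylow: "real y \<ge> real h / 2048"
    proof -
      have "h < 1024 * y + 1024" unfolding y_def using div_mult_mod_eq[of h 1024] mod_less_divisor[of 1024 h] by linarith
      hence "real h < 1024 * real y + 1024" by linarith
      hence "real h / 1024 - 1 \<le> real y" by linarith
      thus ?thesis using h4 by simp
    qed
    have y2: "y \<ge> 2" using h4 unfolding y_def by simp
    have ci: "(2::nat)^(h div 2) \<le> M^(\<pi> + card R)" "(real M / 2)^h \<le> real h ^ h * real M ^ (\<pi> + card R)"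
      using core_ineq[OF h1 D1 cop big, of y] unfolding R_def \<pi>_def by auto
    have S: "real (\<pi> + card R) \<ge> real h / (20 * ln (2 * real h))"
      using S_bound[OF _ ci] h4 by simp
    have lnpos: "ln (real h / 2048) > 0" using h4 by simp
    have piB: "real \<pi> \<le> real h/(40*ln(2*real h))"
    proof -
      have "real \<pi> \<le> sqrt y + 2 * y * ln 4 / ln y" unfolding \<pi>_def by (rule pi_bound[OF y2])
      also have "sqrt y \<le> sqrt (real h/1024)" using yup by simp
      also have "2 * y * ln 4 / ln y \<le> 2*(real h/1024)*2/ln (real h/2048)"
      proof (rule frac_le)
        show "0 \<le> 2*(real h/1024)*2" by simp
        have "2 * real y * ln 4 \<le> 2*(real h/1024)*2" using yup ln4_le2 by (intro mult_mono) auto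
        thus "real (2 * y) * ln 4 \<le> 2*(real h/1024)*2" by simp
        show "0 < ln (real h/2048)" by (rule lnpos)
        show "ln (real h/2048) \<le> ln (real y)" using ylow h4 by (subst ln_le_cancel_iff) auto
      qed
      also have "sqrt (real h/1024) + 2*(real h/1024)*2/ln (real h/2048) \<le> real h/(40*ln(2*real h))" using H0[OF hH0] .
      finally show ?thesis by simp
    qed
    have T: "real (card R) \<ge> real h / (40 * ln (2 * real h))" using S piB by simp
    have Rsub: "R \<subseteq> {..<h}" unfolding R_def by auto
    obtain w where w: "card R \<le> card {j\<in>R. w \<le> j \<and> j < w + y} * (h div y + 1)"
      using window_exists[OF Rsub, of y] y2 by auto
    define \<Lambda> where "\<Lambda> = {j\<in>R. w \<le> j \<and> j < w + y}"
    have hy: "h div y \<le> 2048"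
    proof -
      have "real h \<le> 2048 * real y" using ylow by simp
      hence "h \<le> 2048 * y" by linarith
      hence "h div y \<le> (2048 * y) div y" by (rule div_le_mono)
      also have "\<dots> = 2048" using y2 by simp
      finally show ?thesis .
    qed
    have "card \<Lambda> * (h div y + 1) \<le> card \<Lambda> * 2049" using hy by (intro mult_le_mono2) simp
    hence "card R \<le> card \<Lambda> * 2049" using w unfolding \<Lambda>_def by linarith
    hence cR: "real (card R) \<le> real (card \<Lambda>) * 2049" by simp
    have L0: "ln (2 * real h) > 0" using h4 by simp
    have "real h \<le> real (card R) * (40 * ln (2 * real h))" using T L0 by (simp add: field_simps)
    also have "\<dots> \<le> (real (card \<Lambda>) * 2049) * (40 * ln (2 * real h))"
      using cR L0 by (intro mult_right_mono) auto
    also have "\<dots> = real (card \<Lambda>) * (81960 * ln (2 * real h))" by simp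
    finally have main: "real h \<le> real (card \<Lambda>) * (81960 * ln (2 * real h))" .
    define P where "P = (\<lambda>k. SOME p. prime p \<and> y < p \<and> p dvd (M - k*D))"
    have Pk: "prime (P k) \<and> y < P k \<and> P k dvd (M - k*D)" if "k \<in> \<Lambda>" for k
    proof -
      have "\<exists>p. prime p \<and> y < p \<and> p dvd (M - k*D)" using that unfolding \<Lambda>_def R_def by auto
      thus ?thesis unfolding P_def by (rule someI_ex)
    qed
    show "\<exists>\<Lambda> P. \<Lambda> \<subseteq> {..<h} \<and> real h \<le> real (card \<Lambda>) * (81960 * ln (2 * real h)) \<and>
        (\<forall>k\<in>\<Lambda>. prime (P k) \<and> P k dvd (M - k*D) \<and> (\<forall>l\<in>\<Lambda>. l \<noteq> k \<longrightarrow> \<not> P k dvd (M - l*D)))"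
    proof (intro exI conjI ballI impI)
      show "\<Lambda> \<subseteq> {..<h}" unfolding \<Lambda>_def R_def by auto
      show "real h \<le> real (card \<Lambda>) * (81960 * ln (2 * real h))" by (rule main)
      fix k assume k: "k \<in> \<Lambda>"
      show "prime (P k)" "P k dvd (M - k*D)" using Pk[OF k] by auto
      fix l assume l: "l \<in> \<Lambda>" "l \<noteq> k"
      show "\<not> P k dvd (M - l*D)"
      proof (rule lonely[OF D1 cop big])
        show "k < h" "l < h" "k \<noteq> l" using k l unfolding \<Lambda>_def R_def by auto
        show "w \<le> k" "k < w + y" "w \<le> l" "l < w + y" using k l unfolding \<Lambda>_def by auto
        show "prime (P k)" "y < P k" "P k dvd (M - k*D)" using Pk[OF k] by auto
      qed
    qed
  qed
  moreover have "H \<ge> 4096" unfolding H_def by simp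
  ultimately show ?thesis by blast
qed

interpretation fvs: vector_space "\<lambda>(c::real) (f::nat\<Rightarrow>real) p. c * f p"
  by unfold_locales (auto simp: fun_eq_iff algebra_simps)

lemma sum_fun_apply: "finite A \<Longrightarrow> (\<Sum>x\<in>A. (f x :: 'a \<Rightarrow> 'b::comm_monoid_add)) p = (\<Sum>x\<in>A. f x p)"
  by (induction A rule: finite_induct) auto

lemma indep_count:
  fixes z :: "'i \<Rightarrow> nat \<Rightarrow> real" and P :: "'i \<Rightarrow> nat"
  assumes fin: "finite \<Lambda>" and fW: "finite W"
    and diag: "\<And>k. k\<in>\<Lambda> \<Longrightarrow> z k (P k) \<noteq> 0"
    and off: "\<And>k l. k\<in>\<Lambda> \<Longrightarrow> l\<in>\<Lambda> \<Longrightarrow> l\<noteq>k \<Longrightarrow> z l (P k) = 0"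
    and sp: "\<And>k. k\<in>\<Lambda> \<Longrightarrow> z k \<in> fvs.span W"
  shows "card \<Lambda> \<le> card W"
proof -
  have inj: "inj_on z \<Lambda>"
  proof (rule inj_onI)
    fix k l assume "k\<in>\<Lambda>" "l\<in>\<Lambda>" "z k = z l"
    then show "k = l" using diag off by metis
  qed
  have ind: "fvs.independent (z ` \<Lambda>)"
  proof (rule fvs.independent_if_scalars_zero)
    show "finite (z ` \<Lambda>)" using fin by simp
    fix f x assume s: "(\<Sum>x\<in>z ` \<Lambda>. (\<lambda>p. f x * x p)) = 0" and x: "x \<in> z ` \<Lambda>"
    then obtain k where k: "k \<in> \<Lambda>" "x = z k" by auto
    have "(\<Sum>y\<in>z ` \<Lambda>. (\<lambda>p. f y * y p)) (P k) = 0" using s by simp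
    hence "(\<Sum>y\<in>z ` \<Lambda>. f y * y (P k)) = 0" using fin by (simp add: sum_fun_apply)  
    also have "(\<Sum>y\<in>z ` \<Lambda>. f y * y (P k)) = (\<Sum>l\<in>\<Lambda>. f (z l) * z l (P k))"
      using inj by (simp add: sum.reindex)
    also have "\<dots> = f (z k) * z k (P k)"
      using fin k(1) off by (subst sum.remove[of _ k]) auto
    finally show "f x = 0" using diag[OF k(1)] k by simp
  qed
  have "card (z ` \<Lambda>) \<le> card W"
    using fvs.independent_span_bound[OF fW ind] sp by auto
  thus ?thesis using inj card_image by metis
qed

lemma la_part:
  fixes B :: "nat set" and G :: nat and e :: "nat \<Rightarrow> nat" and \<Lambda> :: "nat set" and P :: "nat \<Rightarrow> nat"
  assumes finB: "finite B" and G0: "G > 0" and finL: "finite \<Lambda>"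
    and fac: "\<And>k. k\<in>\<Lambda> \<Longrightarrow> e k > 0 \<and> (\<exists>b\<in>B. \<exists>b'\<in>B. b*b' = G * e k)"
    and pr: "\<And>k. k\<in>\<Lambda> \<Longrightarrow> prime (P k) \<and> P k dvd e k \<and> (\<forall>l\<in>\<Lambda>. l\<noteq>k \<longrightarrow> \<not> P k dvd e l)"
  shows "card \<Lambda> \<le> card B + 1"
proof -
  define V where "V = (\<lambda>x::nat. \<lambda>p::nat. if prime p then real (multiplicity p x) else 0)"
  define W where "W = insert (V G) (V ` B)"
  have finW: "finite W" unfolding W_def using finB by simp
  have "card \<Lambda> \<le> card W"
  proof (rule indep_count[OF finL finW, of "\<lambda>k. V (e k)" P])
    fix k assume k: "k \<in> \<Lambda>"
    have ek: "e k > 0" and pk: "prime (P k)" "P k dvd e k" using fac[OF k] pr[OF k] by auto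
    show "V (e k) (P k) \<noteq> 0"
    proof -
      have "multiplicity (P k) (e k) > 0" using pk ek by (simp add: prime_multiplicity_gt_zero_iff)
      thus ?thesis unfolding V_def using pk by simp
    qed
    fix l assume l: "l \<in> \<Lambda>" "l \<noteq> k"
    have "\<not> P k dvd e l" using pr[OF k] l by auto
    hence "multiplicity (P k) (e l) = 0" by (simp add: not_dvd_imp_multiplicity_0)
    thus "V (e l) (P k) = 0" unfolding V_def by simp
  next
    fix k assume k: "k \<in> \<Lambda>"
    obtain b b' where bb: "b \<in> B" "b' \<in> B" "b*b' = G * e k" using fac[OF k] by auto
    have ek: "e k > 0" using fac[OF k] by auto
    have "b * b' > 0" using bb(3) G0 ek by simp
    hence b0: "b \<noteq> 0" "b' \<noteq> 0" by auto
    have eq: "V (e k) = (V b + V b') - V G"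
    proof (rule ext)
      fix p
      show "V (e k) p = ((V b + V b') - V G) p"
      proof (cases "prime p")
        case True
        have "multiplicity p (b*b') = multiplicity p b + multiplicity p b'"
          using True b0 by (simp add: prime_elem_multiplicity_mult_distrib)
        moreover have "multiplicity p (G * e k) = multiplicity p G + multiplicity p (e k)"
          using True G0 ek by (simp add: prime_elem_multiplicity_mult_distrib)
        ultimately show ?thesis using True bb(3) unfolding V_def by (simp add: fun_diff_def)
      next
        case False thus ?thesis unfolding V_def by (simp add: fun_diff_def)
      qed
    qed
    have "V b \<in> fvs.span W" "V b' \<in> fvs.span W" "V G \<in> fvs.span W"
      unfolding W_def using bb by (auto intro: fvs.span_base)
    hence "(V b + V b') - V G \<in> fvs.span W" by (intro fvs.span_diff fvs.span_add)
    thus "V (e k) \<in> fvs.span W" using eq by simp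
  qed
  also have "card W \<le> Suc (card (V ` B))" unfolding W_def using finB by (simp add: card_insert_if)
  also have "card (V ` B) \<le> card B" by (rule card_image_le[OF finB])
  finally show ?thesis by simp
qed

lemma card_prodset: "finite B \<Longrightarrow> card (prodset B) \<le> card B ^ 2"
proof -
  assume f: "finite B"
  have "prodset B = (\<lambda>(x,y). x*y) ` (B \<times> B)" unfolding prodset_def by auto
  moreover have "card ((\<lambda>(x,y). x*y) ` (B \<times> B)) \<le> card (B \<times> B)"
    by (rule card_image_le) (simp add: f)
  ultimately have "card (prodset B) \<le> card (B \<times> B)" by simp
  also have "\<dots> = card B ^ 2" by (simp add: card_cartesian_product power2_eq_square)
  finally show ?thesis .
qed

lemma finite_prodset: "finite B \<Longrightarrow> finite (prodset B)"
proof -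
  assume f: "finite B"
  have "prodset B = (\<lambda>(x,y). x*y) ` (B \<times> B)" unfolding prodset_def by auto
  thus ?thesis using f by simp
qed

lemma int_sub_helper:
  fixes M j D :: nat and t :: int
  assumes "int M - int j * int D = t" "t \<ge> 0"
  shows "int (M - j*D) = t"
proof -
  have "int (j * D) \<le> int M" using assms by simp
  hence "j * D \<le> M" by (simp only: of_nat_le_iff)
  thus ?thesis using assms by (simp add: of_nat_diff)
qed

lemma ap_setup:
  fixes a d :: int and N :: nat
  assumes d0: "d \<noteq> 0" and N1: "N \<ge> 1" and nonneg: "\<And>i. i < N \<Longrightarrow> a + int i * d \<ge> 0"
  shows "\<exists>g D M :: nat. g > 0 \<and> D \<ge> 1 \<and> coprime M D \<and> (N - 1) * D \<le> M \<and>
           (\<forall>j<N. \<exists>i<N. a + int i * d = int g * int (M - j * D))"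
proof -
  define g where "g = gcd a d"
  have gpos: "g > 0" unfolding g_def using d0 by simp
  define a' where "a' = a div g"
  define d' where "d' = d div g"
  have aeq: "a = g * a'" unfolding a'_def g_def by simp
  have deq: "d = g * d'" unfolding d'_def g_def by simp
  have cop': "coprime a' d'" unfolding a'_def d'_def g_def using d0 by (intro div_gcd_coprime) auto
  have d'0: "d' \<noteq> 0" using deq d0 by auto
  define s where "s = (\<lambda>i::nat. a' + int i * d')"
  have teq: "a + int i * d = g * s i" for i unfolding s_def aeq deq by (simp add: algebra_simps)
  have snn: "s i \<ge> 0" if "i < N" for i
  proof -
    have "g * s i \<ge> 0" using nonneg[OF that] teq[of i] by simp
    thus ?thesis using gpos by (simp add: zero_le_mult_iff)
  qed
  have scop: "coprime (s i) d'" for i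
  proof (rule coprimeI)
    fix c assume c1: "c dvd s i" and c2: "c dvd d'"
    have "c dvd s i - int i * d'" using c1 c2 by simp
    hence "c dvd a'" unfolding s_def by simp
    thus "is_unit c" using c2 cop' coprime_common_divisor by blast
  qed
  show ?thesis
  proof (cases "d' > 0")
    case True
    define M where "M = nat (s (N - 1))"
    define D where "D = nat d'"
    have Ms: "int M = s (N - 1)" unfolding M_def using snn[of "N-1"] N1 by simp
    have Dd: "int D = d'" unfolding D_def using True by simp
    show ?thesis
    proof (rule exI[of _ "nat g"], rule exI[of _ D], rule exI[of _ M], intro conjI allI impI)
      show "nat g > 0" using gpos by simp
      show "D \<ge> 1" using True unfolding D_def by simp
      show "coprime M D"
      proof -
        have "coprime (int M) (int D)" using scop[of "N-1"] Ms Dd by simp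
        thus ?thesis by simp
      qed
      show "(N - 1) * D \<le> M"
      proof -
        have "int M - int (N - 1) * int D = s 0" using Ms Dd N1 unfolding s_def by (simp add: algebra_simps)
        hence "int ((N - 1) * D) \<le> int M" using snn[of 0] N1 by simp
        thus ?thesis by (simp only: of_nat_le_iff)
      qed
      fix j assume j: "j < N"
      show "\<exists>i<N. a + int i * d = int (nat g) * int (M - j * D)"
      proof -
        have lt: "N - 1 - j < N" using j by simp
        have "int (M - j*D) = s (N - 1 - j)"
        proof -
          have "int M - int j * int D = s (N - 1 - j)" using Ms Dd j unfolding s_def
            by (simp add: of_nat_diff algebra_simps)
          moreover have "s (N - 1 - j) \<ge> 0" using snn j by simp
          ultimately show ?thesis by (rule int_sub_helper)
        qed
        hence "a + int (N - 1 - j) * d = int (nat g) * int (M - j * D)" using teq gpos by simp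
        thus ?thesis using lt by blast
      qed
    qed
  next
    case False
    hence dneg: "d' < 0" using d'0 by simp
    define M where "M = nat (s 0)"
    define D where "D = nat (- d')"
    have Ms: "int M = s 0" unfolding M_def using snn[of 0] N1 by simp
    have Dd: "int D = - d'" unfolding D_def using dneg by simp
    show ?thesis
    proof (rule exI[of _ "nat g"], rule exI[of _ D], rule exI[of _ M], intro conjI allI impI)
      show "nat g > 0" using gpos by simp
      show "D \<ge> 1" using dneg unfolding D_def by simp
      show "coprime M D"
      proof -
        have "coprime (int M) (int D)" using scop[of 0] Ms Dd by simp
        thus ?thesis by simp
      qed
      show "(N - 1) * D \<le> M"
      proof -
        have "int M - int (N - 1) * int D = s (N - 1)" using Ms Dd N1 unfolding s_def by (simp add: algebra_simps)
        hence "int ((N - 1) * D) \<le> int M" using snn[of "N-1"] N1 by simp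
        thus ?thesis by (simp only: of_nat_le_iff)
      qed
      fix j assume j: "j < N"
      show "\<exists>i<N. a + int i * d = int (nat g) * int (M - j * D)"
      proof -
        have "int (M - j*D) = s j"
        proof -
          have "int M - int j * int D = s j" using Ms Dd unfolding s_def by (simp add: algebra_simps)
          moreover have "s j \<ge> 0" using snn j by simp
          ultimately show ?thesis by (rule int_sub_helper)
        qed
        hence "a + int j * d = int (nat g) * int (M - j * D)" using teq gpos by simp
        thus ?thesis using j by blast
      qed
    qed
  qed
qed

theorem theorem1:
  shows "\<exists>C::real. C > 0 \<and>
    (\<forall>(B::nat set) (a::int) (d::int) (N::nat).
       finite B \<and> card B \<ge> 2 \<and> d \<noteq> 0 \<and>
       (\<forall>i<N. a + int i * d \<in> int ` prodset B)
       \<longrightarrow> real N \<le> C * real (card B) * ln (real (card B)))"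
proof -
  obtain H where H4: "H \<ge> 4096" and core: "\<And>h D M :: nat. h \<ge> H \<Longrightarrow> D \<ge> 1 \<Longrightarrow> coprime M D \<Longrightarrow> (2*h - 1) * D \<le> M \<Longrightarrow>
     (\<exists>\<Lambda> P. \<Lambda> \<subseteq> {..<h} \<and> real h \<le> real (card \<Lambda>) * (81960 * ln (2 * real h)) \<and>
        (\<forall>k\<in>\<Lambda>. prime (P k) \<and> P k dvd (M - k*D) \<and> (\<forall>l\<in>\<Lambda>. l \<noteq> k \<longrightarrow> \<not> P k dvd (M - l*D))))"
    using core_main by blast
  define C :: real where "C = max (real (2*H+2)) (6*81960+1)"
  show ?thesis
  proof (intro exI conjI allI impI)
    show "C > 0" unfolding C_def by simp
    fix B :: "nat set" and a d :: int and N :: nat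
    assume asm: "finite B \<and> card B \<ge> 2 \<and> d \<noteq> 0 \<and> (\<forall>i<N. a + int i * d \<in> int ` prodset B)"
    hence finB: "finite B" and n2: "card B \<ge> 2" and d0: "d \<noteq> 0"
      and ap: "\<And>i. i < N \<Longrightarrow> a + int i * d \<in> int ` prodset B" by auto
    define n where "n = card B"
    have n2': "real n \<ge> 2" using n2 unfolding n_def by simp
    have lnn: "ln (real n) \<ge> 1/2"
    proof -
      have "ln (real n) \<ge> ln 2" using n2' by simp
      thus ?thesis using ln2_half by linarith
    qed
    have nln1: "real n * ln (real n) \<ge> 1"
    proof -
      have "real n * ln (real n) \<ge> 2 * (1/2)" using n2' lnn by (intro mult_mono) auto
      thus ?thesis by simp
    qed
    have Cge: "C \<ge> 6*81960+1" "C \<ge> real (2*H+2)" unfolding C_def by auto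
    show "real N \<le> C * real (card B) * ln (real (card B))"
    proof (cases "N < 2*H+2")
      case True
      have "real N \<le> real (2*H+2)" using True by simp
      also have "\<dots> \<le> C" using Cge by simp
      also have "\<dots> = C * 1" by simp
      also have "\<dots> \<le> C * (real n * ln (real n))"
        using nln1 Cge by (intro mult_left_mono) auto
      finally show ?thesis unfolding n_def by (simp add: mult.assoc)
    next
      case False
      define h where "h = N div 2"
      have hH: "h \<ge> H" unfolding h_def using False by simp
      have N1: "N \<ge> 1" using False by simp
      have nonneg: "a + int i * d \<ge> 0" if "i < N" for i
        using ap[OF that] by auto
      obtain g D M :: nat where g0: "g > 0" and D1: "D \<ge> 1" and cop: "coprime M D"
        and ND: "(N - 1) * D \<le> M" and rep: "\<And>j. j < N \<Longrightarrow> \<exists>i<N. a + int i * d = int g * int (M - j * D)"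
        using ap_setup[OF d0 N1 nonneg] by blast
      have big: "(2*h - 1) * D \<le> M"
      proof -
        have "2*h - 1 \<le> N - 1" unfolding h_def by simp
        hence "(2*h - 1) * D \<le> (N - 1) * D" by (rule mult_le_mono1)
        thus ?thesis using ND by linarith
      qed
      obtain \<Lambda> P where Lsub: "\<Lambda> \<subseteq> {..<h}" and Lbig: "real h \<le> real (card \<Lambda>) * (81960 * ln (2 * real h))"
        and LP: "\<And>k. k\<in>\<Lambda> \<Longrightarrow> prime (P k) \<and> P k dvd (M - k*D) \<and> (\<forall>l\<in>\<Lambda>. l \<noteq> k \<longrightarrow> \<not> P k dvd (M - l*D))"
        using core[OF hH D1 cop big] by blast
      have finL: "finite \<Lambda>" using Lsub finite_subset by blast
      have cardL: "card \<Lambda> \<le> card B + 1"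
      proof (rule la_part[OF finB g0 finL, of "\<lambda>k. M - k*D" P])
        fix k assume k: "k \<in> \<Lambda>"
        have kh: "k < h" using k Lsub by auto
        have kN: "k < N" using kh unfolding h_def by simp
        have epos: "M - k*D > 0"
        proof -
          have "(k+1) * D \<le> (2*h-1)*D" using kh by (intro mult_le_mono1) simp
          hence "k * D + D \<le> M" using big by (simp add: algebra_simps)
          thus ?thesis using D1 by linarith
        qed
        obtain i where i: "i < N" "a + int i * d = int g * int (M - k * D)" using rep[OF kN] by blast
        have "int g * int (M - k * D) \<in> int ` prodset B" using ap[OF i(1)] i(2) by simp
        then obtain x where x: "x \<in> prodset B" "int g * int (M - k * D) = int x" by auto
        have "x = g * (M - k*D)" using x(2) by (metis of_nat_eq_iff of_nat_mult)
        then obtain b b' where "b \<in> B" "b' \<in> B" "b * b' = g * (M - k*D)"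
          using x(1) unfolding prodset_def by auto
        thus "M - k*D > 0 \<and> (\<exists>b\<in>B. \<exists>b'\<in>B. b*b' = g * (M - k*D))" using epos by blast
      next
        fix k assume "k \<in> \<Lambda>"
        thus "prime (P k) \<and> P k dvd (M - k*D) \<and> (\<forall>l\<in>\<Lambda>. l\<noteq>k \<longrightarrow> \<not> P k dvd (M - l*D))" using LP by blast
      qed
      have Nn: "N \<le> n^2"
      proof -
        have inj: "inj_on (\<lambda>i. a + int i * d) {..<N}" using d0 by (auto simp: inj_on_def)
        have "(\<lambda>i. a + int i * d) ` {..<N} \<subseteq> int ` prodset B" using ap by auto
        hence "card ((\<lambda>i. a + int i * d) ` {..<N}) \<le> card (int ` prodset B)"
          using finB finite_prodset by (intro card_mono) auto
        also have "\<dots> \<le> card (prodset B)" by (rule card_image_le) (use finB finite_prodset in auto)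
        also have "\<dots> \<le> n^2" unfolding n_def by (rule card_prodset[OF finB])
        finally show ?thesis using card_image[OF inj] by simp
      qed
      have h1: "real h \<ge> 1" using hH H4 by simp
      have l2h: "ln (2 * real h) \<le> 2 * ln (real n)"
      proof -
        have "2 * h \<le> N" unfolding h_def by simp
        hence "2 * h \<le> n^2" using Nn by linarith
        hence "real (2 * h) \<le> real (n^2)" by (simp only: of_nat_le_iff)
        hence "2 * real h \<le> real n ^ 2" by simp
        hence "ln (2 * real h) \<le> ln (real n ^ 2)" using h1 n2' by (subst ln_le_cancel_iff) auto
        also have "\<dots> = 2 * ln (real n)" using n2' by (simp add: ln_realpow)
        finally show ?thesis .
      qed
      have L0: "ln (real n) > 0" using lnn by simp
      have "real h \<le> real (card \<Lambda>) * (81960 * ln (2 * real h))" by (rule Lbig)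
      also have "\<dots> \<le> (real n + 1) * (81960 * (2 * ln (real n)))"
      proof (rule mult_mono)
        show "real (card \<Lambda>) \<le> real n + 1" using cardL unfolding n_def by simp
        show "81960 * ln (2 * real h) \<le> 81960 * (2 * ln (real n))" using l2h by simp
        show "0 \<le> real n + 1" by simp
        show "0 \<le> 81960 * ln (2 * real h)" using h1 by simp
      qed
      finally have hb: "real h \<le> (real n + 1) * (81960 * (2 * ln (real n)))" .
      have "real N \<le> 2 * real h + 1" unfolding h_def by linarith
      also have "\<dots> \<le> 2 * ((real n + 1) * (81960 * (2 * ln (real n)))) + 1" using hb by linarith
      also have "\<dots> \<le> (6*81960+1) * (real n * ln (real n))"
      proof -
        have "(real n + 1) * ln (real n) \<le> (3/2 * real n) * ln (real n)"
          using n2' L0 by (intro mult_right_mono) auto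
        hence "2 * ((real n + 1) * (81960 * (2 * ln (real n)))) \<le> 6*81960 * (real n * ln (real n))"
          by (simp add: algebra_simps)
        thus ?thesis using nln1 by (simp add: algebra_simps)
      qed
      also have "\<dots> \<le> C * (real n * ln (real n))"
        using Cge nln1 by (intro mult_right_mono) auto
      finally show ?thesis unfolding n_def by (simp add: mult.assoc)
    qed
  qed
qed

end
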